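(* Let $R$ be a finite commutative ring with unity such that $\Gamma_E(R)$ is a fan graph with at least four vertices. Then $R$ is a local ring.
   Context: For $x,y\in R$ write $x\sim y$ iff $\operatorname{ann}(x)=\operatorname{ann}(y)$; $[x]$ denotes the equivalence class of $x$. Let $Z^*(R)$ be the set of nonzero zero divisors of $R$. The graph $\Gamma_E(R)$ is the simple graph whose vertices are the classes $[x]$ with $x\in Z^*(R)$, two distinct vertices $[x],[y]$ being adjacent iff $xy=0$. A fan graph is a complete bipartite graph $K_{n,1}$ with $n\in\mathbb N\cup\{\infty\}$. *)

theory Defs
  imports "HOL-Algebra.Algebra"
begin

definition ann :: "('a, 'm) ring_scheme \<Rightarrow> 'a \<Rightarrow> 'a set" where
  "ann R x = {y \<in> carrier R. x \<otimes>\<^bsub>R\<^esub> y = \<zero>\<^bsub>R\<^esub>}"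

definition nz_zero_divisors :: "('a, 'm) ring_scheme \<Rightarrow> 'a set" where
  "nz_zero_divisors R = {x \<in> carrier R. x \<noteq> \<zero>\<^bsub>R\<^esub> \<and>
       (\<exists>y \<in> carrier R. y \<noteq> \<zero>\<^bsub>R\<^esub> \<and> x \<otimes>\<^bsub>R\<^esub> y = \<zero>\<^bsub>R\<^esub>)}"

definition ann_class :: "('a, 'm) ring_scheme \<Rightarrow> 'a \<Rightarrow> 'a set" where
  "ann_class R x = {y \<in> carrier R. ann R y = ann R x}"

definition GammaE_vertices :: "('a, 'm) ring_scheme \<Rightarrow> 'a set set" where
  "GammaE_vertices R = ann_class R ` nz_zero_divisors R"

definition GammaE_adj :: "('a, 'm) ring_scheme \<Rightarrow> 'a set \<Rightarrow> 'a set \<Rightarrow> bool" where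
  "GammaE_adj R A B \<longleftrightarrow> A \<noteq> B \<and>
     (\<exists>x \<in> nz_zero_divisors R. \<exists>y \<in> nz_zero_divisors R.
        A = ann_class R x \<and> B = ann_class R y \<and> x \<otimes>\<^bsub>R\<^esub> y = \<zero>\<^bsub>R\<^esub>)"

(* simple graph (V, E) is a fan graph K_{n,1}: a centre c adjacent to every other
   vertex, with no edges among the remaining n vertices (n \<ge> 1) *)
definition fan_graph :: "'v set \<Rightarrow> ('v \<Rightarrow> 'v \<Rightarrow> bool) \<Rightarrow> bool" where
  "fan_graph V E \<longleftrightarrow> (\<exists>c \<in> V. (\<exists>v \<in> V. v \<noteq> c) \<and>
      (\<forall>v \<in> V. v \<noteq> c \<longrightarrow> E c v \<and> E v c) \<and>
      (\<forall>u \<in> V. \<forall>v \<in> V. u \<noteq> c \<longrightarrow> v \<noteq> c \<longrightarrow> \<not> E u v))"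

definition local_ring :: "('a, 'm) ring_scheme \<Rightarrow> bool" where
  "local_ring R \<longleftrightarrow> (\<exists>!I. maximalideal I R)"

end

theory Submission imports Defs begin
context cring begin
lemma cls_mem: "x \<in> carrier R \<Longrightarrow> x \<in> ann_class R x" by (simp add: ann_class_def)
lemma cls_eq: "x \<in> carrier R \<Longrightarrow> y \<in> carrier R \<Longrightarrow> ann_class R x = ann_class R y \<longleftrightarrow> ann R x = ann R y"
  unfolding ann_class_def by blast
lemma ann_mem: "y \<in> ann R x \<longleftrightarrow> y \<in> carrier R \<and> x \<otimes> y = \<zero>" by (simp add: ann_def)
lemma zd_mem: "x \<in> nz_zero_divisors R \<longleftrightarrow> x \<in> carrier R \<and> x \<noteq> \<zero> \<and> (\<exists>y \<in> carrier R. y \<noteq> \<zero> \<and> x \<otimes> y = \<zero>)"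
  by (simp add: nz_zero_divisors_def)

lemma adj_prod:
  assumes "GammaE_adj R (ann_class R x) (ann_class R y)" "x \<in> carrier R" "y \<in> carrier R"
  shows "x \<otimes> y = \<zero>"
proof -
  obtain x' y' where x': "x' \<in> nz_zero_divisors R" and y': "y' \<in> nz_zero_divisors R"
    and ex: "ann_class R x = ann_class R x'" and ey: "ann_class R y = ann_class R y'"
    and p: "x' \<otimes> y' = \<zero>" using assms(1) unfolding GammaE_adj_def by blast
  have cx: "x' \<in> carrier R" "y' \<in> carrier R" using x' y' by (auto simp: zd_mem)
  have a1: "ann R x = ann R x'" "ann R y = ann R y'" using ex ey cls_eq cx assms by auto
  have "y' \<in> ann R x" using a1 p cx by (simp add: ann_mem)
  hence "x \<otimes> y' = \<zero>" by (simp add: ann_mem)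
  hence "x \<in> ann R y" using a1 assms cx by (simp add: ann_mem m_comm)
  thus ?thesis using assms(2,3) m_comm by (simp add: ann_mem)
qed

lemma adj_intro:
  assumes "x \<in> nz_zero_divisors R" "y \<in> nz_zero_divisors R" "ann R x \<noteq> ann R y" "x \<otimes> y = \<zero>"
  shows "GammaE_adj R (ann_class R x) (ann_class R y)"
proof -
  have c: "x \<in> carrier R" "y \<in> carrier R" using assms by (auto simp: zd_mem)
  have "ann_class R x \<noteq> ann_class R y" using cls_eq[OF c] assms(3) by simp
  thus ?thesis unfolding GammaE_adj_def using assms by blast
qed

lemma idem_false:
  assumes cV: "c \<in> GammaE_vertices R"
    and cadj: "\<forall>v \<in> GammaE_vertices R. v \<noteq> c \<longrightarrow> GammaE_adj R c v \<and> GammaE_adj R v c"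
    and nadj: "\<forall>u \<in> GammaE_vertices R. \<forall>v \<in> GammaE_vertices R. u \<noteq> c \<longrightarrow> v \<noteq> c \<longrightarrow> \<not> GammaE_adj R u v"
    and card: "card (GammaE_vertices R) \<ge> 4"
    and ce: "c = ann_class R e" and e: "e \<in> carrier R" "e \<otimes> e = e" "e \<noteq> \<zero>" "e \<noteq> \<one>"
  shows False
proof -
  define V where "V = GammaE_vertices R"
  define f where "f = \<one> \<ominus> e"
  have fc: "f \<in> carrier R" using e by (simp add: f_def)
  have "e \<otimes> f = e \<ominus> e \<otimes> e" unfolding f_def using e(1) by algebra
  hence ef: "e \<otimes> f = \<zero>" using e by (simp add: r_neg)
  have fe: "f \<otimes> e = \<zero>" using ef e fc m_comm by simp
  have ff: "f \<noteq> \<zero>" using e unfolding f_def by (metis a_minus_def add.inv_closed minus_equality one_closed r_neg1 r_zero r_neg2 add.m_comm)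
  have fin: "finite V" using card V_def by (metis card.infinite not_numeral_le_zero)
  obtain x where xZ: "x \<in> nz_zero_divisors R" and xc: "ann_class R x \<noteq> c" and xf: "ann_class R x \<noteq> ann_class R f"
  proof -
    have "\<not> V \<subseteq> {c, ann_class R f}"
    proof
      assume "V \<subseteq> {c, ann_class R f}"
      hence "card V \<le> card {c, ann_class R f}" by (rule card_mono[rotated]) simp
      also have "\<dots> \<le> 2" by (simp add: card_insert_if)
      finally show False using card V_def by simp
    qed
    then obtain v where "v \<in> V" "v \<noteq> c" "v \<noteq> ann_class R f" by blast
    thus ?thesis using that unfolding V_def GammaE_vertices_def by blast
  qed
  have xcar: "x \<in> carrier R" "x \<noteq> \<zero>" using xZ by (auto simp: zd_mem)
  have xV: "ann_class R x \<in> V" using xZ by (simp add: V_def GammaE_vertices_def)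
  have ex: "e \<otimes> x = \<zero>" using cadj xV xc adj_prod ce e xcar unfolding V_def by blast
  have "ann R f \<subseteq> ann R x"
  proof
    fix y assume "y \<in> ann R f"
    hence y: "y \<in> carrier R" "f \<otimes> y = \<zero>" by (auto simp: ann_mem)
    have "y = f \<otimes> y \<oplus> e \<otimes> y" unfolding f_def using y(1) e(1) by algebra
    hence "y = e \<otimes> y" using y e by simp
    hence "x \<otimes> y = (x \<otimes> e) \<otimes> y" using y e xcar by (simp add: m_assoc)
    also have "\<dots> = \<zero>" using ex e xcar y by (simp add: m_comm)
    finally show "y \<in> ann R x" using y by (simp add: ann_mem)
  qed
  moreover have "ann R f \<noteq> ann R x" using xf cls_eq fc xcar by auto
  ultimately obtain y where y: "y \<in> ann R x" "y \<notin> ann R f" by blast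
  have yc: "y \<in> carrier R" "x \<otimes> y = \<zero>" using y by (auto simp: ann_mem)
  define b where "b = f \<otimes> y"
  have bc: "b \<in> carrier R" "b \<noteq> \<zero>" using y yc fc by (auto simp: ann_mem b_def)
  have xb: "x \<otimes> b = \<zero>" unfolding b_def using yc fc xcar
    by (metis m_assoc m_comm r_null)
  have eb: "e \<otimes> b = \<zero>" unfolding b_def using yc fc e ef by (metis m_assoc l_null)
  have bZ: "b \<in> nz_zero_divisors R" using bc eb e m_comm by (auto simp: zd_mem)
  have "ann R b \<noteq> ann R e" 
  proof
    assume "ann R b = ann R e"
    moreover have "e \<in> ann R b" using eb e bc m_comm by (simp add: ann_mem)
    ultimately show False using e by (simp add: ann_mem)
  qed
  hence bnc: "ann_class R b \<noteq> c" using ce cls_eq bc e by auto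
  have bV: "ann_class R b \<in> V" using bZ by (simp add: V_def GammaE_vertices_def)
  have "ann R x = ann R b"
  proof (rule ccontr)
    assume "ann R x \<noteq> ann R b"
    hence "GammaE_adj R (ann_class R x) (ann_class R b)" using adj_intro xZ bZ xb by blast
    thus False using nadj xV bV xc bnc unfolding V_def by blast
  qed
  moreover have "x \<in> ann R b" using xb xcar bc m_comm by (simp add: ann_mem)
  ultimately have "x \<in> ann R x" by simp
  hence xx: "x \<otimes> x = \<zero>" by (simp add: ann_mem)
  define w where "w = e \<oplus> x"
  have wc: "w \<in> carrier R" using e xcar by (simp add: w_def)
  have wx: "w \<otimes> x = \<zero>" unfolding w_def using e xcar ex xx by (simp add: l_distr)
  have "w \<noteq> \<zero>"
  proof
    assume "w = \<zero>"
    hence "e = \<ominus> x" unfolding w_def using e xcar by (metis add.inv_closed add.m_comm minus_equality)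
    moreover have "\<ominus> x \<otimes> \<ominus> x = x \<otimes> x" using xcar(1) by algebra
    ultimately have "e \<otimes> e = x \<otimes> x" by simp
    thus False using e xx by simp
  qed
  hence wZ: "w \<in> nz_zero_divisors R" using wc wx xcar by (auto simp: zd_mem)
  have wV: "ann_class R w \<in> V" using wZ by (simp add: V_def GammaE_vertices_def)
  show False
  proof (cases "ann_class R w = c")
    case True
    hence "ann R w = ann R e" using ce cls_eq wc e by auto
    moreover have "f \<in> ann R e" using ef fc by (simp add: ann_mem)
    ultimately have "f \<in> ann R w" by simp
    hence wf0: "w \<otimes> f = \<zero>" by (simp add: ann_mem)
    have "w \<otimes> f = e \<ominus> e \<otimes> e \<oplus> x \<ominus> e \<otimes> x" unfolding w_def f_def using e(1) xcar(1) by algebra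
    moreover have "e \<ominus> e \<oplus> x \<ominus> \<zero> = x" using e(1) xcar(1) by algebra
    ultimately have "w \<otimes> f = x" using e ex xcar by simp
    thus False using xcar wf0 by simp
  next
    case False
    hence "e \<otimes> w = \<zero>" using cadj wV adj_prod ce e wc unfolding V_def by blast
    moreover have "e \<otimes> w = e" unfolding w_def using e xcar ex by (simp add: r_distr)
    ultimately show False using e by simp
  qed
qed

lemma pow_idem:
  assumes fin: "finite (carrier R)" and a: "a \<in> carrier R"
  shows "\<exists>k\<ge>1. a [^] k \<otimes> a [^] k = a [^] (k::nat)"
proof -
  have "\<not> inj (\<lambda>n::nat. a [^] n)"
  proof
    assume "inj (\<lambda>n::nat. a [^] n)"
    moreover have "finite (range (\<lambda>n::nat. a [^] n))"
      using a by (intro finite_subset[OF _ fin]) auto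
    ultimately have "finite (UNIV :: nat set)" using finite_imageD by blast
    thus False by simp
  qed
  then obtain i j :: nat where ij: "i \<noteq> j" "a [^] i = a [^] j" unfolding inj_def by blast
  obtain i j :: nat where ij: "i < j" "a [^] i = a [^] j"
  proof (cases "i < j")
    case True thus ?thesis using that ij by blast
  next
    case False thus ?thesis using that[of j i] ij by simp
  qed
  define p where "p = j - i"
  have pp: "p > 0" using ij by (simp add: p_def)
  have step: "a [^] (n + p) = a [^] n" if "n \<ge> i" for n
  proof -
    have "a [^] (n + p) = a [^] (n - i) \<otimes> a [^] j"
      using a that ij by (simp add: nat_pow_mult p_def)
    also have "\<dots> = a [^] (n - i) \<otimes> a [^] i" using ij by simp
    also have "\<dots> = a [^] n" using a that by (simp add: nat_pow_mult)
    finally show ?thesis .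
  qed
  have gen: "a [^] (n + m * p) = a [^] n" if "n \<ge> i" for n m
  proof (induction m)
    case 0 thus ?case by simp
  next
    case (Suc m)
    have "a [^] (n + Suc m * p) = a [^] ((n + m * p) + p)" by (simp add: algebra_simps)
    also have "\<dots> = a [^] (n + m * p)" using step that by simp
    finally show ?case using Suc by simp
  qed
  define k where "k = (i + 1) * p"
  have "(i+1)*1 \<le> (i+1)*p" using pp by (intro mult_le_mono2) simp
  hence k1: "k \<ge> i + 1" by (simp add: k_def)
  have "a [^] k \<otimes> a [^] k = a [^] (k + (i + 1) * p)" using a by (simp add: nat_pow_mult k_def)
  also have "\<dots> = a [^] k" using gen[of k "i+1"] k1 by simp
  finally show ?thesis using k1 by (intro exI[of _ k]) simp
qed

lemma prime_pow:
  assumes "primeideal P R" "a \<in> carrier R" "a [^] (n::nat) \<in> P" "n \<ge> 1"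
  shows "a \<in> P"
  using assms(3,4)
proof (induction n)
  case 0 thus ?case by simp
next
  case (Suc n)
  show ?case
  proof (cases "n = 0")
    case True thus ?thesis using Suc assms(2) by simp
  next
    case False
    have "a [^] n \<otimes> a \<in> P" using Suc by simp
    hence "a [^] n \<in> P \<or> a \<in> P" using primeideal.I_prime[OF assms(1)] assms(2) by simp
    thus ?thesis using Suc False by auto
  qed
qed

lemma exists_maximal:
  assumes fin: "finite (carrier R)" and nt: "\<one> \<noteq> \<zero>"
  shows "\<exists>M. maximalideal M R"
proof -
  define S where "S = {I. ideal I R \<and> I \<noteq> carrier R}"
  have "S \<subseteq> Pow (carrier R)" unfolding S_def by (auto dest: ideal.Icarr)
  hence finS: "finite S" using fin by (meson finite_Pow_iff finite_subset)
  have "carrier R \<noteq> {\<zero>}" using nt one_closed by blast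
  hence "{\<zero>} \<in> S" unfolding S_def using zeroideal by simp
  then obtain M where M: "M \<in> S" "\<forall>J\<in>S. M \<subseteq> J \<longrightarrow> M = J"
    using finite_has_maximal[OF finS] by blast
  have "maximalideal M R"
  proof (rule maximalidealI)
    show "ideal M R" "carrier R \<noteq> M" using M(1) by (auto simp: S_def)
    fix J assume "ideal J R" "M \<subseteq> J" "J \<subseteq> carrier R"
    thus "J = M \<or> J = carrier R" using M(2) unfolding S_def by blast
  qed
  thus ?thesis by blast
qed

lemma two_max_sum:
  assumes "maximalideal M1 R" "maximalideal M2 R" "M1 \<noteq> M2"
  shows "\<exists>a\<in>M1. \<exists>m\<in>M2. \<one> = a \<oplus> m"
proof -
  interpret m1: maximalideal M1 R by fact
  interpret m2: maximalideal M2 R by fact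
  have id: "ideal (M1 <+> M2) R" by (rule add_ideals) (rule assms(1)[THEN maximalideal.axioms(1)], rule assms(2)[THEN maximalideal.axioms(1)])
  have sub1: "M1 \<subseteq> M1 <+> M2"
  proof
    fix x assume x: "x \<in> M1"
    have "x \<oplus> \<zero> \<in> M1 <+> M2" unfolding set_add_def' using x m2.zero_closed by blast
    thus "x \<in> M1 <+> M2" using x m1.Icarr by simp
  qed
  have sub2: "M2 \<subseteq> M1 <+> M2"
  proof
    fix x assume x: "x \<in> M2"
    have "\<zero> \<oplus> x \<in> M1 <+> M2" unfolding set_add_def' using x m1.zero_closed by blast
    thus "x \<in> M1 <+> M2" using x m2.Icarr by simp
  qed
  have subc: "M1 <+> M2 \<subseteq> carrier R" using ideal.Icarr[OF id] by blast
  have "M1 <+> M2 = carrier R"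
  proof (rule ccontr)
    assume "M1 <+> M2 \<noteq> carrier R"
    hence e: "M1 <+> M2 = M1" using m1.I_maximal[OF id sub1 subc] by blast
    have "M2 \<subseteq> M1" using sub2 e by simp
    hence "M1 = M2 \<or> M1 = carrier R" using m2.I_maximal[OF m1.is_ideal] m1.Icarr by blast
    thus False using assms(3) m1.I_notcarr by auto
  qed
  hence "\<one> \<in> M1 <+> M2" by simp
  then obtain a m where "a \<in> M1" "m \<in> M2" "\<one> = a \<oplus> m" unfolding set_add_def' by blast
  thus ?thesis by blast
qed
end

lemma (in cring) main:
  assumes "finite (carrier R)"
    and "fan_graph (GammaE_vertices R) (GammaE_adj R)"
    and "card (GammaE_vertices R) \<ge> 4"
  shows "local_ring R"
proof -
  obtain c where cV: "c \<in> GammaE_vertices R"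
    and cadj: "\<forall>v \<in> GammaE_vertices R. v \<noteq> c \<longrightarrow> GammaE_adj R c v \<and> GammaE_adj R v c"
    and nadj: "\<forall>u \<in> GammaE_vertices R. \<forall>v \<in> GammaE_vertices R. u \<noteq> c \<longrightarrow> v \<noteq> c \<longrightarrow> \<not> GammaE_adj R u v"
    using assms(2) unfolding fan_graph_def by blast
  obtain z where z: "z \<in> nz_zero_divisors R" using cV unfolding GammaE_vertices_def by blast
  have nt: "\<one> \<noteq> \<zero>"
  proof
    assume "\<one> = \<zero>"
    moreover have "z \<in> carrier R" "z \<noteq> \<zero>" using z by (auto simp: zd_mem)
    ultimately show False by (metis r_one r_null one_closed)
  qed
  obtain M1 where M1: "maximalideal M1 R" using exists_maximal[OF assms(1) nt] by blast
  show ?thesis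
  proof (rule ccontr)
    assume "\<not> local_ring R"
    then obtain M2 where M2: "maximalideal M2 R" "M1 \<noteq> M2"
      using M1 unfolding local_ring_def by blast
    obtain a m where am: "a \<in> M1" "m \<in> M2" "\<one> = a \<oplus> m"
      using two_max_sum[OF M1 M2] by blast
    interpret m1: maximalideal M1 R by (rule M1)
    interpret m2: maximalideal M2 R by (rule M2(1))
    have ac: "a \<in> carrier R" "m \<in> carrier R" using am m1.Icarr m2.Icarr by auto
    obtain k :: nat where k: "k \<ge> 1" "a [^] k \<otimes> a [^] k = a [^] k"
      using pow_idem[OF assms(1) ac(1)] by blast
    define e where "e = a [^] k"
    have ec: "e \<in> carrier R" using ac by (simp add: e_def)
    have "a [^] k = a [^] (k - 1) \<otimes> a" using k(1) ac
      by (metis le_add_diff_inverse2 nat_pow_Suc Suc_eq_plus1)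
    hence eM1: "e \<in> M1" using am(1) ac m1.I_l_closed by (simp add: e_def)
    have e1: "e \<noteq> \<one>" using eM1 m1.one_imp_carrier m1.I_notcarr by auto
    have e0: "e \<noteq> \<zero>"
    proof
      assume "e = \<zero>"
      hence "a [^] k \<in> M2" using m2.zero_closed by (simp add: e_def)
      hence "a \<in> M2" using prime_pow[OF maximalideal_prime[OF M2(1)] ac(1) _ k(1)] by blast
      hence "\<one> \<in> M2" using am m2.a_closed by simp
      thus False using m2.one_imp_carrier m2.I_notcarr by auto
    qed
    have ee: "e \<otimes> e = e" using k by (simp add: e_def)
    define f where "f = \<one> \<ominus> e"
    have fc: "f \<in> carrier R" using ec by (simp add: f_def)
    have "e \<otimes> f = e \<ominus> e \<otimes> e" unfolding f_def using ec by algebra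
    hence ef: "e \<otimes> f = \<zero>" using ee ec by (simp add: r_neg)
    have "f \<otimes> f = \<one> \<ominus> e \<ominus> e \<oplus> e \<otimes> e" unfolding f_def using ec by algebra
    moreover have "\<one> \<ominus> e \<ominus> e \<oplus> e = \<one> \<ominus> e" using ec by algebra
    ultimately have ff: "f \<otimes> f = f" using ee by (simp add: f_def)
    have "\<one> = f \<oplus> e" unfolding f_def using ec by algebra
    hence f0: "f \<noteq> \<zero>" using e1 ec by auto
    have f1: "f \<noteq> \<one>"
    proof
      assume "f = \<one>"
      hence "e \<otimes> \<one> = \<zero>" using ef by simp
      thus False using ec e0 by simp
    qed
    have fe: "f \<otimes> e = \<zero>" using ef ec fc m_comm by simp
    have eZ: "e \<in> nz_zero_divisors R" using ec e0 fc f0 ef by (auto simp: zd_mem)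
    have fZ: "f \<in> nz_zero_divisors R" using fc f0 ec e0 fe by (auto simp: zd_mem)
    have "ann R e \<noteq> ann R f"
    proof
      assume "ann R e = ann R f"
      moreover have "e \<in> ann R f" using fe ec by (simp add: ann_mem)
      ultimately have "e \<in> ann R e" by simp
      thus False using ee e0 by (simp add: ann_mem)
    qed
    hence adjef: "GammaE_adj R (ann_class R e) (ann_class R f)" using adj_intro eZ fZ ef by blast
    have neq: "ann_class R e \<noteq> ann_class R f" using adjef unfolding GammaE_adj_def by blast
    have eV: "ann_class R e \<in> GammaE_vertices R" "ann_class R f \<in> GammaE_vertices R"
      using eZ fZ by (auto simp: GammaE_vertices_def)
    show False
    proof (cases "c = ann_class R e")
      case True
      show False by (rule idem_false[OF cV cadj nadj assms(3) True ec ee e0 e1])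
    next
      case False
      show False
      proof (cases "c = ann_class R f")
        case True
        show False by (rule idem_false[OF cV cadj nadj assms(3) True fc ff f0 f1])
      next
        case False2: False
        show False using nadj eV False False2 adjef by blast
      qed
    qed
  qed
qed


theorem corollary2p5:
  fixes R :: "('a, 'm) ring_scheme"
  assumes "cring R"
    and "finite (carrier R)"
    and "fan_graph (GammaE_vertices R) (GammaE_adj R)"
    and "card (GammaE_vertices R) \<ge> 4"
  shows "local_ring R"
  using cring.main[OF assms] .

end
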